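(* For any finite simple graph $G$ on $n$ vertices with $c(G)$ connected components, $\mathrm{mur}(G)\le n-c(G)$.
   Context: For a finite simple undirected graph $G$ on vertices $v_1,\dots,v_n$, let $A_G$ be its $(0,1)$-adjacency matrix, $D_G=\mathrm{diag}(d_1,\dots,d_n)$ with $d_i$ the degree of $v_i$, $I$ the $n\times n$ identity matrix and $J$ the $n\times n$ all-ones matrix. A universal adjacency matrix of $G$ is any matrix $\alpha A_G+\beta I+\gamma J+\delta D_G$ with real scalars $\alpha,\beta,\gamma,\delta$ and $\alpha\neq 0$. The minimum universal rank $\mathrm{mur}(G)$ is the minimum rank over all universal adjacency matrices of $G$. *)

theory Defs
  imports "HOL-Analysis.Analysis"
begin

text \<open>A finite simple graph on the vertex type 'n (finite): an irreflexive symmetric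
  adjacency relation E. The vertices are all elements of 'n, so n = CARD('n).\<close>

definition simple_graph :: "('n::finite \<Rightarrow> 'n \<Rightarrow> bool) \<Rightarrow> bool" where
  "simple_graph E \<longleftrightarrow> (\<forall>x. \<not> E x x) \<and> (\<forall>x y. E x y \<longrightarrow> E y x)"

definition adj_matrix :: "('n::finite \<Rightarrow> 'n \<Rightarrow> bool) \<Rightarrow> real^'n^'n" where
  "adj_matrix E = (\<chi> i j. if E i j then 1 else 0)"

definition degree :: "('n::finite \<Rightarrow> 'n \<Rightarrow> bool) \<Rightarrow> 'n \<Rightarrow> nat" where
  "degree E v = card {u. E v u}"

definition deg_matrix :: "('n::finite \<Rightarrow> 'n \<Rightarrow> bool) \<Rightarrow> real^'n^'n" where
  "deg_matrix E = (\<chi> i j. if i = j then real (degree E i) else 0)"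

definition ones_matrix :: "real^'n^'n" where
  "ones_matrix = (\<chi> i j. 1)"

definition universal_adj :: "('n::finite \<Rightarrow> 'n \<Rightarrow> bool) \<Rightarrow> real \<Rightarrow> real \<Rightarrow> real \<Rightarrow> real \<Rightarrow> real^'n^'n" where
  "universal_adj E \<alpha> \<beta> \<gamma> \<delta> =
     \<alpha> *\<^sub>R adj_matrix E + \<beta> *\<^sub>R mat 1 + \<gamma> *\<^sub>R ones_matrix + \<delta> *\<^sub>R deg_matrix E"

definition mur :: "('n::finite \<Rightarrow> 'n \<Rightarrow> bool) \<Rightarrow> nat" where
  "mur E = Min {rank (universal_adj E \<alpha> \<beta> \<gamma> \<delta>) | \<alpha> \<beta> \<gamma> \<delta>. \<alpha> \<noteq> 0}"

definition num_components :: "('n::finite \<Rightarrow> 'n \<Rightarrow> bool) \<Rightarrow> nat" where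
  "num_components E = card (UNIV // {(x, y). E\<^sup>*\<^sup>* x y})"

end

theory Submission
  imports Defs
begin

definition ind :: "'n::finite set \<Rightarrow> real^'n" where
  "ind C = (\<chi> i. if i \<in> C then 1 else 0)"

lemma class_closed:
  fixes E :: "'n::finite \<Rightarrow> 'n \<Rightarrow> bool"
  assumes sg: "simple_graph E" and C: "C \<in> UNIV // {(x, y). E\<^sup>*\<^sup>* x y}" and e: "E i j"
  shows "i \<in> C \<longleftrightarrow> j \<in> C"
proof -
  from C obtain a where Ca: "C = {(x, y). E\<^sup>*\<^sup>* x y} `` {a}" by (auto elim: quotientE)
  have "E j i" using sg e unfolding simple_graph_def by blast
  then show ?thesis using e unfolding Ca
    by (auto intro: rtranclp.rtrancl_into_rtrancl)
qed

lemma lap_ind: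
  fixes E :: "'n::finite \<Rightarrow> 'n \<Rightarrow> bool"
  assumes sg: "simple_graph E" and C: "C \<in> UNIV // {(x, y). E\<^sup>*\<^sup>* x y}"
  shows "universal_adj E (-1) 0 0 1 *v ind C = 0"
proof -
  have "(universal_adj E (-1) 0 0 1 *v ind C) $ i = 0" for i
  proof -
    have "(universal_adj E (-1) 0 0 1 *v ind C) $ i
        = (\<Sum>j\<in>UNIV. (if i = j then real (degree E i) * ind C $ j else 0)) - (\<Sum>j\<in>UNIV. (if E i j then ind C $ j else 0))"
      unfolding matrix_vector_mult_def universal_adj_def adj_matrix_def deg_matrix_def ones_matrix_def
      by (subst sum_subtractf[symmetric]) (auto intro!: sum.cong simp: algebra_simps)
    also have "(\<Sum>j\<in>UNIV. (if E i j then ind C $ j else 0)) = (\<Sum>j\<in>UNIV. (if E i j then ind C $ i else 0))"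
      using class_closed[OF sg C] by (intro sum.cong) (auto simp: ind_def)
    also have "\<dots> = (\<Sum>j\<in>{j. E i j}. ind C $ i)"
      by (simp add: sum.If_cases)
    also have "\<dots> = real (degree E i) * ind C $ i"
      by (simp add: degree_def)
    finally show ?thesis by simp
  qed
  then show ?thesis by (simp add: vec_eq_iff)
qed

theorem theorem3:
  fixes E :: "'n::finite \<Rightarrow> 'n \<Rightarrow> bool"
  assumes "simple_graph E"
  shows "mur E \<le> CARD('n) - num_components E"
proof -
  define R where "R = {(x, y). E\<^sup>*\<^sup>* x y}"
  define L where "L = universal_adj E (-1) 0 0 1"
  define S where "S = ind ` (UNIV // R)"
  have symE: "E\<^sup>*\<^sup>* y x" if "E\<^sup>*\<^sup>* x y" for x y
    using that
  proof (induct rule: rtranclp_induct)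
    case base then show ?case by simp
  next
    case (step y z)
    then have "E z y" using assms unfolding simple_graph_def by blast
    then show ?case using step(3) by (rule converse_rtranclp_into_rtranclp)
  qed
  have eqR: "equiv UNIV R" unfolding R_def
    using symE by (auto simp: equiv_def refl_on_def sym_def trans_def
        intro: rtranclp_trans)
  have cls_ne: "C \<noteq> {}" if "C \<in> UNIV // R" for C
    using that eqR by (metis in_quotient_imp_non_empty)
  have disj: "C \<inter> C' = {}" if "C \<in> UNIV // R" "C' \<in> UNIV // R" "C \<noteq> C'" for C C'
    using that eqR quotient_disj by blast
  have inj: "inj_on ind (UNIV // R)"
  proof (rule inj_onI)
    fix C C' assume h: "C \<in> UNIV // R" "C' \<in> UNIV // R" "ind C = ind C'"
    show "C = C'"
    proof (rule ccontr)
      assume "C \<noteq> C'"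
      obtain a where "a \<in> C" using cls_ne h(1) by blast
      then have "a \<notin> C'" using disj[OF h(1,2) \<open>C \<noteq> C'\<close>] by blast
      then have "ind C $ a \<noteq> ind C' $ a" using \<open>a \<in> C\<close> by (simp add: ind_def)
      with h(3) show False by simp
    qed
  qed
  have cardS: "card S = num_components E"
    unfolding S_def num_components_def R_def[symmetric] using inj by (simp add: card_image)
  have indep: "independent S"
  proof (rule pairwise_orthogonal_independent)
    show "pairwise orthogonal S"
      unfolding pairwise_def S_def
    proof clarsimp
      fix C C' assume h: "C \<in> UNIV // R" "C' \<in> UNIV // R" "ind C \<noteq> ind C'"
      then have "C \<noteq> C'" by blast
      then have d: "C \<inter> C' = {}" using disj h by blast
      show "orthogonal (ind C) (ind C')"
        unfolding orthogonal_def inner_vec_def ind_def using d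
        by (auto intro!: sum.neutral)
    qed
    show "0 \<notin> S"
    proof
      assume "0 \<in> S"
      then obtain C where "C \<in> UNIV // R" "ind C = 0" unfolding S_def by auto
      moreover obtain a where "a \<in> C" using cls_ne \<open>C \<in> UNIV // R\<close> by blast
      then have "ind C $ a = 1" by (simp add: ind_def)
      ultimately show False by simp
    qed
  qed
  have kerS: "S \<subseteq> {x. L *v x = 0}"
    unfolding S_def L_def R_def using lap_ind[OF assms] by auto
  have sub: "subspace {x. L *v x = 0}"
    by (auto simp: subspace_def matrix_vector_right_distrib matrix_vector_mult_scaleR)
  have spanS: "span S \<subseteq> {x. L *v x = 0}"
    using kerS sub by (simp add: span_minimal)
  have symL: "transpose L = L"
    using assms unfolding simple_graph_def by (auto simp: L_def universal_adj_def adj_matrix_def deg_matrix_def ones_matrix_def transpose_def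
        vec_eq_iff mat_def)
  have rng: "range (\<lambda>v. L *v v) \<subseteq> {y \<in> UNIV. \<forall>x\<in>span S. orthogonal x y}"
  proof clarsimp
    fix v x assume "x \<in> span S"
    then have "L *v x = 0" using spanS by blast
    then have "x v* L = 0" by (metis symL transpose_matrix_vector)
    then show "orthogonal x (L *v v)"
      by (metis dot_lmul_matrix inner_zero_left orthogonal_def)
  qed
  have "rank L = dim (range (\<lambda>v. L *v v))" by (rule rank_dim_range)
  also have "\<dots> \<le> dim {y \<in> UNIV. \<forall>x\<in>span S. orthogonal x y}"
    using rng by (rule dim_subset)
  also have "\<dots> = CARD('n) - card S"
    using dim_subspace_orthogonal_to_vectors[of "span S" UNIV] dim_span_eq_card_independent[OF indep]
    by simp
  finally have rk: "rank L \<le> CARD('n) - num_components E" using cardS by simp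
  have fin: "finite {rank (universal_adj E \<alpha> \<beta> \<gamma> \<delta>) | \<alpha> \<beta> \<gamma> \<delta>. \<alpha> \<noteq> 0}"
    by (rule finite_subset[of _ "{..CARD('n)}"]) (auto simp: rank_bound le_trans[OF rank_bound])
  have "mur E \<le> rank L"
    unfolding mur_def L_def by (rule Min_le[OF fin]) (rule CollectI, rule exI[of _ "-1"], auto)
  with rk show ?thesis by simp
qed

end
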